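(* Let $\Gamma=A\ast B$ with $A,B$ non-trivial, let $f=f_A\ast f_B$ be a split quasimorphism with homogenization $\widehat f$ and bounded cohomology class $\omega_f=[\partial f]_\mathrm{b}\in\mathrm{H}^2_\mathrm{b}(\Gamma,\mathbb{R})$. Then \[ \|\omega_f\|=\tfrac12\,\mathrm{def}\,\widehat f=\mathrm{def}\, f=\max\{\mathrm{def}\, f_A,\mathrm{def}\, f_B\}. \] In particular, $f$ is a minimal defect representative for its class.
   Context: A quasimorphism is a map $f:\Gamma\to\mathbb{R}$ with $\mathrm{def}\, f=\sup_{g,h}|f(gh)-f(g)-f(h)|<\infty$; it is alternating if $f(g^{-1})=-f(g)$. Its homogenization is $\widehat f(g)=\lim_{n\to\infty}f(g^n)/n$. $\omega_f$ is the class in second bounded cohomology (bounded bar complex, trivial coefficients) of the bounded 2-cocycle $\partial f(g,h)=f(g)+f(h)-f(gh)$, and the Gromov norm is $\|\omega_f\|=\inf\{\mathrm{def}\,(f+\beta):\beta:\Gamma\to\mathbb{R}\text{ bounded}\}$. Each $1\neq g\in A\ast B$ has a unique normal form $g=a_1b_1\cdots a_nb_n$ ($a_i\in A$, $b_i\in B$, all non-trivial except possibly $a_1$ or $b_n$). For alternating quasimorphisms $f_A,f_B$ on $A,B$ the split quasimorphism is $f(1)=0$, $f(a_1b_1\cdots a_nb_n)=f_A(a_1)+f_B(b_1)+\dots+f_A(a_n)+f_B(b_n)$. *)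

theory Defs
  imports Complex_Main "HOL-Algebra.Group"
begin

definition defect_set :: "('a, 'b) monoid_scheme \<Rightarrow> ('a \<Rightarrow> real) \<Rightarrow> real set" where
  "defect_set G f = {\<bar>f (g \<otimes>\<^bsub>G\<^esub> h) - f g - f h\<bar> | g h. g \<in> carrier G \<and> h \<in> carrier G}"

definition quasimorphism :: "('a, 'b) monoid_scheme \<Rightarrow> ('a \<Rightarrow> real) \<Rightarrow> bool" where
  "quasimorphism G f \<longleftrightarrow> bdd_above (defect_set G f)"

definition defect :: "('a, 'b) monoid_scheme \<Rightarrow> ('a \<Rightarrow> real) \<Rightarrow> real" where
  "defect G f = Sup (defect_set G f)"

definition alternating :: "('a, 'b) monoid_scheme \<Rightarrow> ('a \<Rightarrow> real) \<Rightarrow> bool" where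
  "alternating G f \<longleftrightarrow> (\<forall>g\<in>carrier G. f (inv\<^bsub>G\<^esub> g) = - f g)"

definition homogenization :: "('a, 'b) monoid_scheme \<Rightarrow> ('a \<Rightarrow> real) \<Rightarrow> 'a \<Rightarrow> real" where
  "homogenization G f g = lim (\<lambda>n::nat. f (g [^]\<^bsub>G\<^esub> n) / real n)"

definition bounded_fun :: "('a, 'b) monoid_scheme \<Rightarrow> ('a \<Rightarrow> real) \<Rightarrow> bool" where
  "bounded_fun G \<beta> \<longleftrightarrow> (\<exists>C. \<forall>g\<in>carrier G. \<bar>\<beta> g\<bar> \<le> C)"

text \<open>Gromov norm of the bounded class of the coboundary of f:
  infimum of the defects of f + beta over bounded beta.\<close>
definition gromov_norm_class :: "('a, 'b) monoid_scheme \<Rightarrow> ('a \<Rightarrow> real) \<Rightarrow> real" where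
  "gromov_norm_class G f = Inf {defect G (\<lambda>g. f g + \<beta> g) | \<beta>. bounded_fun G \<beta>}"

text \<open>A normal-form word a_1 b_1 ... a_n b_n, encoded as the list of pairs (a_i,b_i);
  all letters non-trivial except possibly a_1 and b_n.\<close>
definition nf_word :: "('a, 'b) monoid_scheme \<Rightarrow> 'a set \<Rightarrow> 'a set \<Rightarrow> ('a \<times> 'a) list \<Rightarrow> bool" where
  "nf_word G A B ps \<longleftrightarrow> ps \<noteq> [] \<and> set ps \<subseteq> A \<times> B
     \<and> (\<forall>i. 0 < i \<and> i < length ps \<longrightarrow> fst (ps ! i) \<noteq> \<one>\<^bsub>G\<^esub>)
     \<and> (\<forall>i. i + 1 < length ps \<longrightarrow> snd (ps ! i) \<noteq> \<one>\<^bsub>G\<^esub>)"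

definition word_prod :: "('a, 'b) monoid_scheme \<Rightarrow> ('a \<times> 'a) list \<Rightarrow> 'a" where
  "word_prod G ps = foldr (\<lambda>(a, b) acc. a \<otimes>\<^bsub>G\<^esub> b \<otimes>\<^bsub>G\<^esub> acc) ps \<one>\<^bsub>G\<^esub>"

definition is_free_product :: "('a, 'b) monoid_scheme \<Rightarrow> 'a set \<Rightarrow> 'a set \<Rightarrow> bool" where
  "is_free_product G A B \<longleftrightarrow> group G \<and> subgroup A G \<and> subgroup B G \<and>
     (\<forall>g\<in>carrier G. g \<noteq> \<one>\<^bsub>G\<^esub> \<longrightarrow> (\<exists>!ps. nf_word G A B ps \<and> word_prod G ps = g))"

definition normal_form :: "('a, 'b) monoid_scheme \<Rightarrow> 'a set \<Rightarrow> 'a set \<Rightarrow> 'a \<Rightarrow> ('a \<times> 'a) list" where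
  "normal_form G A B g = (THE ps. nf_word G A B ps \<and> word_prod G ps = g)"

definition split_qm :: "('a, 'b) monoid_scheme \<Rightarrow> 'a set \<Rightarrow> 'a set \<Rightarrow> ('a \<Rightarrow> real) \<Rightarrow> ('a \<Rightarrow> real) \<Rightarrow> 'a \<Rightarrow> real" where
  "split_qm G A B fA fB g = (if g = \<one>\<^bsub>G\<^esub> then 0
     else sum_list (map (\<lambda>(a, b). fA a + fB b) (normal_form G A B g)))"

end

theory Submission
  imports Defs
begin


lemma real_nat_le_zero:
  fixes a K :: real
  assumes "\<And>n::nat. n \<ge> 1 \<Longrightarrow> real n * a \<le> K"
  shows "a \<le> 0"
proof (rule ccontr)
  assume "\<not> a \<le> 0" hence a: "a > 0" by simp
  obtain n :: nat where n: "n > K / a" using reals_Archimedean2 by blast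
  have "real (Suc n) * a \<le> K" using assms[of "Suc n"] by simp
  moreover have "K < real (Suc n) * a" using n a by (simp add: field_simps)
  ultimately show False by simp
qed

lemma real_nat_le:
  fixes c d K :: real
  assumes "\<And>n::nat. n \<ge> 1 \<Longrightarrow> real n * c \<le> real n * d + K"
  shows "c \<le> d"
proof -
  have "c - d \<le> 0"
    by (rule real_nat_le_zero[of "c - d" K]) (use assms in \<open>simp add: algebra_simps\<close>)
  thus ?thesis by simp
qed

locale qm = group G for G (structure) +
  fixes \<phi> :: "'a \<Rightarrow> real" and D :: real
  assumes qb: "\<lbrakk>x \<in> carrier G; y \<in> carrier G\<rbrakk> \<Longrightarrow> \<bar>\<phi> (x \<otimes> y) - \<phi> x - \<phi> y\<bar> \<le> D"
begin

lemma D_nonneg: "0 \<le> D"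
  using qb[of \<one> \<one>] by simp

lemma phi_one: "\<bar>\<phi> \<one>\<bar> \<le> D"
  using qb[of \<one> \<one>] by simp

lemma pow_mult_bound:
  assumes x: "x \<in> carrier G"
  shows "\<bar>\<phi> (x [^] (Suc k * n)) - real (Suc k) * \<phi> (x [^] n)\<bar> \<le> real k * D"
proof (induction k)
  case 0 then show ?case by simp
next
  case (Suc k)
  have e: "x [^] (Suc (Suc k) * n) = x [^] n \<otimes> x [^] (Suc k * n)"
    using x by (simp add: nat_pow_mult)
  have "\<bar>\<phi> (x [^] n \<otimes> x [^] (Suc k * n)) - \<phi> (x [^] n) - \<phi> (x [^] (Suc k * n))\<bar> \<le> D"
    using x by (intro qb) auto
  with Suc show ?case unfolding e by (simp add: algebra_simps abs_le_iff)
qed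

lemma seq_close:
  assumes x: "x \<in> carrier G" and m: "m \<ge> 1" and n: "n \<ge> 1"
  shows "\<bar>\<phi> (x [^] (m * n)) / real (m * n) - \<phi> (x [^] n) / real n\<bar> \<le> D / real n"
proof -
  obtain k where k: "m = Suc k" using m by (cases m) auto
  have b: "\<bar>\<phi> (x [^] (m * n)) - real m * \<phi> (x [^] n)\<bar> \<le> real m * D"
  proof -
    have "\<bar>\<phi> (x [^] (m * n)) - real m * \<phi> (x [^] n)\<bar> \<le> real k * D"
      using pow_mult_bound[OF x, of k n] k by simp
    moreover have "real k * D \<le> real m * D" using D_nonneg k by (simp add: mult_right_mono)
    ultimately show ?thesis by linarith
  qed
  have "\<phi> (x [^] (m * n)) / real (m * n) - \<phi> (x [^] n) / real n
        = (\<phi> (x [^] (m * n)) - real m * \<phi> (x [^] n)) / real (m * n)"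
    using m n by (simp add: field_simps)
  also have "\<bar>\<dots>\<bar> = \<bar>\<phi> (x [^] (m * n)) - real m * \<phi> (x [^] n)\<bar> / real (m * n)"
    by simp
  also have "\<dots> \<le> real m * D / real (m * n)"
    using b by (intro divide_right_mono) auto
  also have "\<dots> = D / real n" using m n by simp
  finally show ?thesis .
qed

lemma seq_cauchy:
  assumes x: "x \<in> carrier G"
  shows "Cauchy (\<lambda>n. \<phi> (x [^] n) / real n)"
proof (rule metric_CauchyI)
  fix e :: real assume e: "e > 0"
  obtain M :: nat where M: "M > 2 * D / e" using reals_Archimedean2 by blast
  show "\<exists>M. \<forall>m\<ge>M. \<forall>n\<ge>M. dist (\<phi> (x [^] m) / real m) (\<phi> (x [^] n) / real n) < e"
  proof (intro exI[of _ "Suc M"] allI impI)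
    fix m n assume m: "Suc M \<le> m" and n: "Suc M \<le> n"
    have 1: "\<bar>\<phi> (x [^] (n * m)) / real (n * m) - \<phi> (x [^] m) / real m\<bar> \<le> D / real m"
      using seq_close[OF x, of n m] m n by simp
    have 2: "\<bar>\<phi> (x [^] (m * n)) / real (m * n) - \<phi> (x [^] n) / real n\<bar> \<le> D / real n"
      using seq_close[OF x, of m n] m n by simp
    have mn: "n * m = m * n" by simp
    have "D / real m \<le> D / real (Suc M)" using m D_nonneg by (intro divide_left_mono) auto
    moreover have "D / real n \<le> D / real (Suc M)" using n D_nonneg by (intro divide_left_mono) auto
    moreover have "2 * (D / real (Suc M)) < e"
    proof -
      have "2 * D < e * real M" using M e by (simp add: field_simps)
      also have "\<dots> \<le> e * real (Suc M)" using e by simp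
      finally show ?thesis by (simp add: field_simps)
    qed
    ultimately show "dist (\<phi> (x [^] m) / real m) (\<phi> (x [^] n) / real n) < e"
      using 1 2 unfolding dist_real_def mn by linarith
  qed
qed

abbreviation "\<psi> \<equiv> homogenization G \<phi>"

lemma hom_tendsto:
  assumes x: "x \<in> carrier G"
  shows "(\<lambda>n. \<phi> (x [^] n) / real n) \<longlonglongrightarrow> \<psi> x"
  using seq_cauchy[OF x] unfolding homogenization_def
  by (simp add: Cauchy_convergent_iff convergent_LIMSEQ_iff)

lemma hom_close:
  assumes x: "x \<in> carrier G"
  shows "\<bar>\<phi> (x [^] n) - real n * \<psi> x\<bar> \<le> D"
proof (cases "n = 0")
  case True then show ?thesis using phi_one by simp
next
  case False
  let ?s = "\<lambda>k. \<phi> (x [^] k) / real k"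
  have sm: "strict_mono (\<lambda>m. Suc m * n)" using False by (simp add: strict_mono_def)
  have "(?s \<circ> (\<lambda>m. Suc m * n)) \<longlonglongrightarrow> \<psi> x"
    using LIMSEQ_subseq_LIMSEQ[OF hom_tendsto[OF x] sm] .
  hence t: "(\<lambda>m. \<bar>?s (Suc m * n) - ?s n\<bar>) \<longlonglongrightarrow> \<bar>\<psi> x - ?s n\<bar>"
    by (intro tendsto_intros) (simp add: o_def)
  have "\<bar>\<psi> x - ?s n\<bar> \<le> D / real n"
  proof (rule LIMSEQ_le_const2[OF t], intro exI allI impI)
    fix m :: nat
    show "\<bar>?s (Suc m * n) - ?s n\<bar> \<le> D / real n"
      using seq_close[OF x, of "Suc m" n] False by simp
  qed
  hence "real n * \<bar>\<psi> x - ?s n\<bar> \<le> D" using False by (simp add: field_simps)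
  moreover have "real n * \<bar>\<psi> x - ?s n\<bar> = \<bar>\<phi> (x [^] n) - real n * \<psi> x\<bar>"
    using False by (simp add: abs_mult[symmetric] field_simps abs_minus_commute)
  ultimately show ?thesis by simp
qed

lemma cancel1: "x \<in> carrier G \<Longrightarrow> y \<in> carrier G \<Longrightarrow> x \<otimes> (inv x \<otimes> y) = y"
  by (simp add: m_assoc[symmetric])
lemma cancel2: "x \<in> carrier G \<Longrightarrow> y \<in> carrier G \<Longrightarrow> inv x \<otimes> (x \<otimes> y) = y"
  by (simp add: m_assoc[symmetric])

lemma comm_bound:
  assumes a: "a \<in> carrier G" and b: "b \<in> carrier G"
  shows "\<bar>\<phi> (a \<otimes> b \<otimes> inv a \<otimes> inv b)\<bar> \<le> 3 * D"
proof -
  define p where "p = a \<otimes> b \<otimes> inv a"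
  define c where "c = a \<otimes> b \<otimes> inv a \<otimes> inv b"
  have pc: "p \<in> carrier G" "c \<in> carrier G" using a b by (auto simp: p_def c_def)
  have e1: "p \<otimes> a = a \<otimes> b" using a b by (simp add: p_def m_assoc)
  have e2: "c \<otimes> b = p" using a b by (simp add: p_def c_def m_assoc)
  have t1: "\<bar>\<phi> (a \<otimes> b) - \<phi> a - \<phi> b\<bar> \<le> D" using a b by (rule qb)
  have t2: "\<bar>\<phi> (p \<otimes> a) - \<phi> p - \<phi> a\<bar> \<le> D" using pc a by (intro qb) auto
  have t3: "\<bar>\<phi> (c \<otimes> b) - \<phi> c - \<phi> b\<bar> \<le> D" using pc b by (intro qb) auto
  show ?thesis using t1 t2 t3 unfolding e1 e2 c_def[symmetric] by (simp add: abs_le_iff)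
qed

lemma conj_comm_bound:
  assumes a: "a \<in> carrier G" and b: "b \<in> carrier G" and c: "c \<in> carrier G"
  shows "\<bar>\<phi> (c \<otimes> (a \<otimes> b \<otimes> inv a \<otimes> inv b) \<otimes> inv c)\<bar> \<le> 3 * D"
proof -
  have "c \<otimes> (a \<otimes> b \<otimes> inv a \<otimes> inv b) \<otimes> inv c
      = (c \<otimes> a \<otimes> inv c) \<otimes> (c \<otimes> b \<otimes> inv c) \<otimes> inv (c \<otimes> a \<otimes> inv c) \<otimes> inv (c \<otimes> b \<otimes> inv c)"
    using a b c by (simp add: inv_mult_group m_assoc cancel1 cancel2)
  thus ?thesis using comm_bound[of "c \<otimes> a \<otimes> inv c" "c \<otimes> b \<otimes> inv c"] a b c by simp
qed

lemma conj_bound: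
  assumes c: "c \<in> carrier G" and y: "y \<in> carrier G"
  shows "\<bar>\<phi> (c \<otimes> y \<otimes> inv c) - \<phi> y\<bar> \<le> 4 * D"
proof -
  have t1: "\<bar>\<phi> (c \<otimes> y \<otimes> inv c) - \<phi> (c \<otimes> y) - \<phi> (inv c)\<bar> \<le> D" using c y by (intro qb) auto
  have t2: "\<bar>\<phi> (c \<otimes> y) - \<phi> c - \<phi> y\<bar> \<le> D" using c y by (intro qb) auto
  have t3: "\<bar>\<phi> (c \<otimes> inv c) - \<phi> c - \<phi> (inv c)\<bar> \<le> D" using c by (intro qb) auto
  have "c \<otimes> inv c = \<one>" using c by simp
  thus ?thesis using t1 t2 t3 phi_one by (simp add: abs_le_iff)
qed

lemma conj_pow:
  assumes c: "c \<in> carrier G" and y: "y \<in> carrier G"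
  shows "(c \<otimes> y \<otimes> inv c) [^] (n::nat) = c \<otimes> y [^] n \<otimes> inv c"
proof (induction n)
  case 0 then show ?case using c by simp
next
  case (Suc n)
  then show ?case using c y by (simp add: m_assoc cancel1 cancel2)
qed

lemma hom_conj:
  assumes c: "c \<in> carrier G" and y: "y \<in> carrier G"
  shows "\<psi> (c \<otimes> y \<otimes> inv c) = \<psi> y"
proof -
  have b: "\<bar>real n * \<psi> (c \<otimes> y \<otimes> inv c) - real n * \<psi> y\<bar> \<le> 6 * D" for n
  proof -
    have 1: "\<bar>\<phi> ((c \<otimes> y \<otimes> inv c) [^] n) - real n * \<psi> (c \<otimes> y \<otimes> inv c)\<bar> \<le> D"
      using c y by (intro hom_close) auto
    have 2: "\<bar>\<phi> (y [^] n) - real n * \<psi> y\<bar> \<le> D" using y by (rule hom_close)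
    have 3: "\<bar>\<phi> (c \<otimes> y [^] n \<otimes> inv c) - \<phi> (y [^] n)\<bar> \<le> 4 * D"
      using c y by (intro conj_bound) auto
    show ?thesis using 1 2 3 unfolding conj_pow[OF c y] by (simp add: abs_le_iff)
  qed
  have b1: "real n * \<psi> (c \<otimes> y \<otimes> inv c) \<le> real n * \<psi> y + 6 * D" for n
    using b[of n] by (simp add: abs_le_iff)
  have b2: "real n * \<psi> y \<le> real n * \<psi> (c \<otimes> y \<otimes> inv c) + 6 * D" for n
    using b[of n] by (simp add: abs_le_iff)
  have "\<psi> (c \<otimes> y \<otimes> inv c) \<le> \<psi> y"
    by (rule real_nat_le[where K="6*D"]) (rule b1)
  moreover have "\<psi> y \<le> \<psi> (c \<otimes> y \<otimes> inv c)"
    by (rule real_nat_le[where K="6*D"]) (rule b2)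
  ultimately show ?thesis by simp
qed

lemma key_identity:
  assumes g: "g \<in> carrier G" and h: "h \<in> carrier G"
  shows "(g \<otimes> h) \<otimes> (g [^] n \<otimes> h [^] n) \<otimes> (g \<otimes> h)
     = (g \<otimes> h \<otimes> h \<otimes> (inv h \<otimes> g [^] n) \<otimes> inv (g \<otimes> h \<otimes> h) \<otimes> inv (inv h \<otimes> g [^] n))
       \<otimes> (inv (g \<otimes> h) \<otimes> (g [^] (Suc (Suc n)) \<otimes> h [^] (Suc (Suc n))) \<otimes> (g \<otimes> h))"
proof -
  have g2: "g [^] (Suc (Suc n)) = g \<otimes> g [^] n \<otimes> g" using g nat_pow_Suc2[OF g, of n] by (metis nat_pow_Suc)
  have h2: "h [^] (Suc (Suc n)) = h \<otimes> (h \<otimes> h [^] n)"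
    using h nat_pow_Suc2[OF h, of n] nat_pow_Suc2[OF h, of "Suc n"] by metis
  show ?thesis unfolding g2 h2 using g h
    by (simp add: inv_mult_group m_assoc cancel1 cancel2)
qed

lemma accum:
  assumes g: "g \<in> carrier G" and h: "h \<in> carrier G"
  shows "\<exists>Q\<in>carrier G. (g \<otimes> h) [^] (2 * m) = Q \<otimes> (inv (g \<otimes> h) \<otimes> (g [^] (2*m) \<otimes> h [^] (2*m)) \<otimes> (g \<otimes> h))
      \<and> (\<forall>c\<in>carrier G. \<bar>\<phi> (c \<otimes> Q \<otimes> inv c)\<bar> \<le> 4 * real m * D + D)"
proof (induction m)
  case 0
  have "(\<forall>c\<in>carrier G. \<bar>\<phi> (c \<otimes> \<one> \<otimes> inv c)\<bar> \<le> 4 * real 0 * D + D)"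
    using phi_one by simp
  then show ?case using g h by (intro bexI[of _ \<one>]) (auto simp: m_assoc)
next
  case (Suc m)
  then obtain Q where Q: "Q \<in> carrier G"
    and e: "(g \<otimes> h) [^] (2 * m) = Q \<otimes> (inv (g \<otimes> h) \<otimes> (g [^] (2*m) \<otimes> h [^] (2*m)) \<otimes> (g \<otimes> h))"
    and bQ: "\<forall>c\<in>carrier G. \<bar>\<phi> (c \<otimes> Q \<otimes> inv c)\<bar> \<le> 4 * real m * D + D" by blast
  define x where "x = (g \<otimes> h) \<otimes> (g \<otimes> h)"
  define a where "a = g \<otimes> h \<otimes> h"
  define b where "b = inv h \<otimes> g [^] (2*m)"
  define K where "K = a \<otimes> b \<otimes> inv a \<otimes> inv b"
  have xc: "x \<in> carrier G" "a \<in> carrier G" "b \<in> carrier G" "K \<in> carrier G"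
    using g h by (auto simp: x_def a_def b_def K_def)
  have ki: "(g \<otimes> h) \<otimes> (g [^] (2*m) \<otimes> h [^] (2*m)) \<otimes> (g \<otimes> h)
     = K \<otimes> (inv (g \<otimes> h) \<otimes> (g [^] (Suc (Suc (2*m))) \<otimes> h [^] (Suc (Suc (2*m)))) \<otimes> (g \<otimes> h))"
    using key_identity[OF g h, of "2*m"] unfolding K_def a_def b_def .
  have pw: "(g \<otimes> h) [^] (2 * Suc m) = x \<otimes> (g \<otimes> h) [^] (2 * m)"
  proof -
    have "(g \<otimes> h) [^] (2 * Suc m) = (g \<otimes> h) [^] (Suc (Suc (2 * m)))" by simp
    also have "\<dots> = x \<otimes> (g \<otimes> h) [^] (2 * m)"
    proof -
      have gh: "g \<otimes> h \<in> carrier G" using g h by simp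
      show ?thesis using nat_pow_Suc2[OF gh, of "Suc (2*m)"] nat_pow_Suc2[OF gh, of "2*m"] gh
        by (simp add: x_def m_assoc del: nat_pow_Suc)
    qed
    finally show ?thesis .
  qed
  have "(g \<otimes> h) [^] (2 * Suc m) = ((x \<otimes> Q \<otimes> inv x) \<otimes> K) \<otimes>
      (inv (g \<otimes> h) \<otimes> (g [^] (2 * Suc m) \<otimes> h [^] (2 * Suc m)) \<otimes> (g \<otimes> h))"
  proof -
    have "(g \<otimes> h) [^] (2 * Suc m) = (x \<otimes> Q \<otimes> inv x) \<otimes> (x \<otimes> (inv (g \<otimes> h) \<otimes> (g [^] (2*m) \<otimes> h [^] (2*m)) \<otimes> (g \<otimes> h)))"
      unfolding pw e using xc Q g h by (simp add: m_assoc cancel1 cancel2)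
    also have "x \<otimes> (inv (g \<otimes> h) \<otimes> (g [^] (2*m) \<otimes> h [^] (2*m)) \<otimes> (g \<otimes> h))
       = (g \<otimes> h) \<otimes> (g [^] (2*m) \<otimes> h [^] (2*m)) \<otimes> (g \<otimes> h)"
      using g h by (simp add: x_def m_assoc cancel1 cancel2)
    also note ki
    finally show ?thesis using xc Q g h by (simp add: m_assoc)
  qed
  moreover have "\<forall>c\<in>carrier G. \<bar>\<phi> (c \<otimes> ((x \<otimes> Q \<otimes> inv x) \<otimes> K) \<otimes> inv c)\<bar> \<le> 4 * real (Suc m) * D + D"
  proof
    fix c assume c: "c \<in> carrier G"
    have eq: "c \<otimes> ((x \<otimes> Q \<otimes> inv x) \<otimes> K) \<otimes> inv c
        = ((c \<otimes> x) \<otimes> Q \<otimes> inv (c \<otimes> x)) \<otimes> (c \<otimes> K \<otimes> inv c)"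
      using c xc Q by (simp add: m_assoc inv_mult_group cancel1 cancel2)
    have 1: "\<bar>\<phi> ((c \<otimes> x) \<otimes> Q \<otimes> inv (c \<otimes> x))\<bar> \<le> 4 * real m * D + D"
      using bQ c xc by auto
    have 2: "\<bar>\<phi> (c \<otimes> K \<otimes> inv c)\<bar> \<le> 3 * D"
      unfolding K_def using conj_comm_bound c xc by auto
    have 3: "\<bar>\<phi> (((c \<otimes> x) \<otimes> Q \<otimes> inv (c \<otimes> x)) \<otimes> (c \<otimes> K \<otimes> inv c))
        - \<phi> ((c \<otimes> x) \<otimes> Q \<otimes> inv (c \<otimes> x)) - \<phi> (c \<otimes> K \<otimes> inv c)\<bar> \<le> D"
      using c xc Q by (intro qb) auto
    show "\<bar>\<phi> (c \<otimes> ((x \<otimes> Q \<otimes> inv x) \<otimes> K) \<otimes> inv c)\<bar> \<le> 4 * real (Suc m) * D + D"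
      unfolding eq using 1 2 3 by (simp add: abs_le_iff algebra_simps)
  qed
  moreover have "(x \<otimes> Q \<otimes> inv x) \<otimes> K \<in> carrier G" using xc Q by auto
  ultimately show ?case by blast
qed

lemma pow_defect:
  assumes g: "g \<in> carrier G" and h: "h \<in> carrier G"
  shows "\<bar>\<phi> ((g \<otimes> h) [^] (2 * m)) - \<phi> (g [^] (2*m)) - \<phi> (h [^] (2*m))\<bar> \<le> 4 * real m * D + 7 * D"
proof -
  obtain Q where Q: "Q \<in> carrier G"
    and e: "(g \<otimes> h) [^] (2 * m) = Q \<otimes> (inv (g \<otimes> h) \<otimes> (g [^] (2*m) \<otimes> h [^] (2*m)) \<otimes> (g \<otimes> h))"
    and bQ: "\<forall>c\<in>carrier G. \<bar>\<phi> (c \<otimes> Q \<otimes> inv c)\<bar> \<le> 4 * real m * D + D"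
    using accum[OF g h, of m] by blast
  define S where "S = g [^] (2*m) \<otimes> h [^] (2*m)"
  define U where "U = inv (g \<otimes> h) \<otimes> S \<otimes> (g \<otimes> h)"
  have SU: "S \<in> carrier G" "U \<in> carrier G" using g h by (auto simp: S_def U_def)
  have 1: "\<bar>\<phi> Q\<bar> \<le> 4 * real m * D + D" using bQ[rule_format, of \<one>] Q by simp
  have 2: "\<bar>\<phi> (Q \<otimes> U) - \<phi> Q - \<phi> U\<bar> \<le> D" using Q SU by (intro qb) auto
  have 3: "\<bar>\<phi> U - \<phi> S\<bar> \<le> 4 * D"
  proof -
    have "U = inv (g \<otimes> h) \<otimes> S \<otimes> inv (inv (g \<otimes> h))" using g h by (simp add: U_def)
    thus ?thesis using conj_bound[of "inv (g \<otimes> h)" S] g h SU by simp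
  qed
  have 4: "\<bar>\<phi> S - \<phi> (g [^] (2*m)) - \<phi> (h [^] (2*m))\<bar> \<le> D" unfolding S_def using g h by (intro qb) auto
  show ?thesis using 1 2 3 4 unfolding e S_def[symmetric] U_def[symmetric] by (simp add: abs_le_iff)
qed

lemma hom_defect:
  assumes g: "g \<in> carrier G" and h: "h \<in> carrier G"
  shows "\<bar>\<psi> (g \<otimes> h) - \<psi> g - \<psi> h\<bar> \<le> 2 * D"
proof -
  have b: "\<bar>real m * (2 * (\<psi> (g \<otimes> h) - \<psi> g - \<psi> h))\<bar> \<le> real m * (4 * D) + 10 * D" for m
  proof -
    have 1: "\<bar>\<phi> ((g \<otimes> h) [^] (2*m)) - real (2*m) * \<psi> (g \<otimes> h)\<bar> \<le> D" using g h by (intro hom_close) auto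
    have 2: "\<bar>\<phi> (g [^] (2*m)) - real (2*m) * \<psi> g\<bar> \<le> D" using g by (intro hom_close) auto
    have 3: "\<bar>\<phi> (h [^] (2*m)) - real (2*m) * \<psi> h\<bar> \<le> D" using h by (intro hom_close) auto
    show ?thesis using 1 2 3 pow_defect[OF g h, of m] by (simp add: abs_le_iff algebra_simps)
  qed
  have b1: "real m * (2 * (\<psi> (g \<otimes> h) - \<psi> g - \<psi> h)) \<le> real m * (4 * D) + 10 * D" for m
    using b[of m] by (simp add: abs_le_iff)
  have b2: "real m * (- (2 * (\<psi> (g \<otimes> h) - \<psi> g - \<psi> h))) \<le> real m * (4 * D) + 10 * D" for m
    using b[of m] unfolding abs_le_iff mult_minus_right by linarith
  have "2 * (\<psi> (g \<otimes> h) - \<psi> g - \<psi> h) \<le> 4 * D"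
    by (rule real_nat_le[where K="10*D"]) (rule b1)
  moreover have "- (2 * (\<psi> (g \<otimes> h) - \<psi> g - \<psi> h)) \<le> 4 * D"
    by (rule real_nat_le[where K="10*D"]) (rule b2)
  ultimately show ?thesis by (simp add: abs_le_iff)
qed

lemma hom_pure:
  assumes x: "x \<in> carrier G" and p: "\<And>n. \<phi> (x [^] n) = real n * c"
  shows "\<psi> x = c"
proof -
  have b: "\<bar>real n * c - real n * \<psi> x\<bar> \<le> D" for n using hom_close[OF x, of n] p[of n] by simp
  have b1: "real n * c \<le> real n * \<psi> x + D" for n using b[of n] by (simp add: abs_le_iff)
  have b2: "real n * \<psi> x \<le> real n * c + D" for n using b[of n] by (simp add: abs_le_iff)
  have "c \<le> \<psi> x" by (rule real_nat_le[where K=D]) (rule b1)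
  moreover have "\<psi> x \<le> c" by (rule real_nat_le[where K=D]) (rule b2)
  ultimately show ?thesis by simp
qed

end

lemma hom_perturb:
  assumes "group G" and x: "x \<in> carrier G"
    and q: "\<And>x y. x \<in> carrier G \<Longrightarrow> y \<in> carrier G \<Longrightarrow> \<bar>\<phi> (x \<otimes>\<^bsub>G\<^esub> y) - \<phi> x - \<phi> y\<bar> \<le> D"
    and bd: "\<forall>g\<in>carrier G. \<bar>\<beta> g\<bar> \<le> C"
  shows "homogenization G (\<lambda>g. \<phi> g + \<beta> g) x = homogenization G \<phi> x"
proof -
  interpret qm G \<phi> D using assms by (simp add: qm_def qm_axioms_def)
  have t1: "(\<lambda>n. \<phi> (x [^]\<^bsub>G\<^esub> n) / real n) \<longlonglongrightarrow> homogenization G \<phi> x" by (rule hom_tendsto[OF x])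
  have t2: "(\<lambda>n. \<beta> (x [^]\<^bsub>G\<^esub> n) / real n) \<longlonglongrightarrow> 0"
  proof (rule tendsto_sandwich[of "\<lambda>n. - C / real n" _ _ "\<lambda>n. C / real n"])
    show "\<forall>\<^sub>F n in sequentially. - C / real n \<le> \<beta> (x [^]\<^bsub>G\<^esub> n) / real n"
    proof (intro always_eventually allI)
      fix n :: nat
      have "x [^]\<^bsub>G\<^esub> n \<in> carrier G" using x by simp
      hence "- C \<le> \<beta> (x [^]\<^bsub>G\<^esub> n)" using bd by (auto simp: abs_le_iff)
      thus "- C / real n \<le> \<beta> (x [^]\<^bsub>G\<^esub> n) / real n" by (intro divide_right_mono) auto
    qed
    show "\<forall>\<^sub>F n in sequentially. \<beta> (x [^]\<^bsub>G\<^esub> n) / real n \<le> C / real n"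
      using bd x by (intro always_eventually allI) (auto simp: divide_right_mono abs_le_iff)
    show "(\<lambda>n. - C / real n) \<longlonglongrightarrow> 0" using lim_const_over_n[of "-C"] by simp
    show "(\<lambda>n. C / real n) \<longlonglongrightarrow> 0" by (rule lim_const_over_n)
  qed
  have "(\<lambda>n. (\<phi> (x [^]\<^bsub>G\<^esub> n) + \<beta> (x [^]\<^bsub>G\<^esub> n)) / real n) \<longlonglongrightarrow> homogenization G \<phi> x + 0"
    using tendsto_add[OF t1 t2] by (simp add: add_divide_distrib)
  thus ?thesis unfolding homogenization_def[of G "\<lambda>g. \<phi> g + \<beta> g"] by (simp add: limI)
qed



locale fpq = group G for G (structure) +
  fixes A B :: "'a set" and fA fB :: "'a \<Rightarrow> real"
  assumes fp: "is_free_product G A B"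
    and qA: "quasimorphism (G\<lparr>carrier := A\<rparr>) fA" and aA: "alternating (G\<lparr>carrier := A\<rparr>) fA"
    and qB: "quasimorphism (G\<lparr>carrier := B\<rparr>) fB" and aB: "alternating (G\<lparr>carrier := B\<rparr>) fB"
begin

lemma sA: "subgroup A G" and sB: "subgroup B G" using fp by (auto simp: is_free_product_def)

lemma A1: "\<one> \<in> A" and B1: "\<one> \<in> B" using sA sB subgroup.one_closed by auto
lemma AG: "x \<in> A \<Longrightarrow> x \<in> carrier G" using sA subgroup.mem_carrier by metis
lemma BG: "x \<in> B \<Longrightarrow> x \<in> carrier G" using sB subgroup.mem_carrier by metis
lemma Am: "x \<in> A \<Longrightarrow> y \<in> A \<Longrightarrow> x \<otimes> y \<in> A" using sA subgroup.m_closed by metis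
lemma Bm: "x \<in> B \<Longrightarrow> y \<in> B \<Longrightarrow> x \<otimes> y \<in> B" using sB subgroup.m_closed by metis
lemma Ai: "x \<in> A \<Longrightarrow> inv x \<in> A" using sA subgroup.m_inv_closed by metis
lemma Bi: "x \<in> B \<Longrightarrow> inv x \<in> B" using sB subgroup.m_inv_closed by metis

lemma uniq:
  assumes "g \<in> carrier G" "g \<noteq> \<one>" "nf_word G A B P" "word_prod G P = g" "nf_word G A B Q" "word_prod G Q = g"
  shows "P = Q"
  using fp assms unfolding is_free_product_def by blast

lemma AB: "x \<in> A \<Longrightarrow> x \<in> B \<Longrightarrow> x = \<one>"
proof (rule ccontr)
  assume x: "x \<in> A" "x \<in> B" "x \<noteq> \<one>"
  have n1: "nf_word G A B [(x, \<one>)]" using x A1 B1 unfolding nf_word_def by (simp; presburger)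
  have n2: "nf_word G A B [(\<one>, x)]" using x A1 B1 unfolding nf_word_def by (simp; presburger)
  have xG: "x \<in> carrier G" using x(1) by (rule AG)
  have w1: "word_prod G [(x, \<one>)] = x" using xG unfolding word_prod_def by simp
  have w2: "word_prod G [(\<one>, x)] = x" using xG unfolding word_prod_def by simp
  have "[(x, \<one>)] = [(\<one>, x)]" by (rule uniq[OF xG x(3) n1 w1 n2 w2])
  then show False using x by simp
qed

lemma fA1: "fA \<one> = 0"
proof -
  have h: "\<forall>g\<in>A. fA (inv g) = - fA g" using aA sA unfolding alternating_def by simp
  have "fA (inv \<one>) = - fA \<one>" using h A1 by blast
  thus ?thesis by simp
qed

lemma fB1: "fB \<one> = 0"
proof -
  have h: "\<forall>g\<in>B. fB (inv g) = - fB g" using aB sB unfolding alternating_def by simp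
  have "fB (inv \<one>) = - fB \<one>" using h B1 by blast
  thus ?thesis by simp
qed

lemma fAi: "x \<in> A \<Longrightarrow> fA (inv x) = - fA x"
  using aA sA unfolding alternating_def by simp
lemma fBi: "x \<in> B \<Longrightarrow> fB (inv x) = - fB x"
  using aB sB unfolding alternating_def by simp

definition DA where "DA = defect (G\<lparr>carrier := A\<rparr>) fA"
definition DB where "DB = defect (G\<lparr>carrier := B\<rparr>) fB"

lemma setA_eq: "defect_set (G\<lparr>carrier := A\<rparr>) fA = {\<bar>fA (g \<otimes> h) - fA g - fA h\<bar> |g h. g \<in> A \<and> h \<in> A}"
  by (simp add: defect_set_def)
lemma setB_eq: "defect_set (G\<lparr>carrier := B\<rparr>) fB = {\<bar>fB (g \<otimes> h) - fB g - fB h\<bar> |g h. g \<in> B \<and> h \<in> B}"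
  by (simp add: defect_set_def)

lemma DA_bound: "x \<in> A \<Longrightarrow> y \<in> A \<Longrightarrow> \<bar>fA (x \<otimes> y) - fA x - fA y\<bar> \<le> DA"
  unfolding DA_def defect_def using qA unfolding quasimorphism_def setA_eq
  by (intro cSup_upper) auto
lemma DB_bound: "x \<in> B \<Longrightarrow> y \<in> B \<Longrightarrow> \<bar>fB (x \<otimes> y) - fB x - fB y\<bar> \<le> DB"
  unfolding DB_def defect_def using qB unfolding quasimorphism_def setB_eq
  by (intro cSup_upper) auto
lemma DA_nonneg: "0 \<le> DA" using DA_bound[OF A1 A1] by linarith
lemma DB_nonneg: "0 \<le> DB" using DB_bound[OF B1 B1] by linarith

definition letter where "letter x \<longleftrightarrow> (x \<in> A \<or> x \<in> B) \<and> x \<noteq> \<one>"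
definition same where "same x y \<longleftrightarrow> (x \<in> A \<and> y \<in> A) \<or> (x \<in> B \<and> y \<in> B)"

lemma same_iff: "letter x \<Longrightarrow> letter y \<Longrightarrow> same x y \<longleftrightarrow> (x \<in> A \<longleftrightarrow> y \<in> A)"
  unfolding letter_def same_def using AB by blast

lemma letter_G: "letter x \<Longrightarrow> x \<in> carrier G"
  unfolding letter_def using AG BG by blast

lemma letter_inv: "letter x \<Longrightarrow> letter (inv x) \<and> (inv x \<in> A \<longleftrightarrow> x \<in> A)"
proof -
  assume l: "letter x"
  hence xG: "x \<in> carrier G" by (rule letter_G)
  have "inv x \<noteq> \<one>" using l xG unfolding letter_def by (metis inv_one inv_inv)
  moreover have "inv x \<in> A \<or> inv x \<in> B" using l Ai Bi unfolding letter_def by blast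
  moreover have "inv x \<in> A \<longleftrightarrow> x \<in> A" using Ai xG by (metis inv_inv)
  ultimately show ?thesis unfolding letter_def by blast
qed

lemma letter_mult: "letter x \<Longrightarrow> letter y \<Longrightarrow> same x y \<Longrightarrow> x \<otimes> y \<noteq> \<one> \<Longrightarrow> letter (x \<otimes> y) \<and> (x \<otimes> y \<in> A \<longleftrightarrow> x \<in> A)"
  unfolding letter_def same_def using Am Bm AB by blast

fun red :: "'a list \<Rightarrow> bool" where
  "red [] = True"
| "red [x] = letter x"
| "red (x # y # r) = (letter x \<and> \<not> same x y \<and> red (y # r))"

lemma red_Cons: "red (x # zs) \<longleftrightarrow> letter x \<and> red zs \<and> (zs \<noteq> [] \<longrightarrow> \<not> same x (hd zs))"
  by (cases zs) auto

lemma red_append: "red (xs @ ys) \<longleftrightarrow> red xs \<and> red ys \<and> (xs \<noteq> [] \<longrightarrow> ys \<noteq> [] \<longrightarrow> \<not> same (last xs) (hd ys))"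
proof (induction xs)
  case Nil then show ?case by simp
next
  case (Cons x xs)
  show ?case
  proof (cases "xs = []")
    case True then show ?thesis using red_Cons[of x ys] by simp
  next
    case False
    have "red ((x # xs) @ ys) = (letter x \<and> red (xs @ ys) \<and> \<not> same x (hd xs))"
      using False by (simp only: append_Cons red_Cons) simp
    also have "\<dots> = (red (x # xs) \<and> red ys \<and> (ys \<noteq> [] \<longrightarrow> \<not> same (last xs) (hd ys)))"
      using False Cons.IH by (simp only: red_Cons) auto
    finally show ?thesis using False by simp
  qed
qed

lemma red_letters: "red ws \<Longrightarrow> x \<in> set ws \<Longrightarrow> letter x"
  by (induction ws rule: red.induct) auto

definition Fl where "Fl x = (if x \<in> A then fA x else fB x)"
definition F where "F ws = sum_list (map Fl ws)"
definition wprod where "wprod ws = foldr (\<otimes>) ws \<one>"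

lemma F_simps [simp]: "F [] = 0" "F (x # ws) = Fl x + F ws" "F (xs @ ys) = F xs + F ys"
  by (auto simp: F_def)

lemma wprod_simps [simp]: "wprod [] = \<one>" "wprod (x # ws) = x \<otimes> wprod ws"
  by (auto simp: wprod_def)

lemma wprod_closed: "set ws \<subseteq> carrier G \<Longrightarrow> wprod ws \<in> carrier G"
  by (induction ws) auto

lemma wprod_append: "set xs \<subseteq> carrier G \<Longrightarrow> set ys \<subseteq> carrier G \<Longrightarrow> wprod (xs @ ys) = wprod xs \<otimes> wprod ys"
  by (induction xs) (auto simp: m_assoc wprod_closed)

lemma red_carrier: "red ws \<Longrightarrow> set ws \<subseteq> carrier G"
  using red_letters letter_G by blast

lemma Fl_inv: "letter x \<Longrightarrow> Fl (inv x) = - Fl x"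
  using letter_inv[of x] fAi fBi unfolding Fl_def letter_def by auto


definition nfi :: "('a \<times> 'a) list \<Rightarrow> bool" where
  "nfi P \<longleftrightarrow> set P \<subseteq> A \<times> B \<and> (\<forall>i. 0 < i \<and> i < length P \<longrightarrow> fst (P ! i) \<noteq> \<one>)
     \<and> (\<forall>i. i + 1 < length P \<longrightarrow> snd (P ! i) \<noteq> \<one>)"
definition nfs where "nfs P \<longleftrightarrow> nfi P \<and> (P \<noteq> [] \<longrightarrow> fst (hd P) \<noteq> \<one>)"

lemma nf_word_iff: "nf_word G A B P \<longleftrightarrow> P \<noteq> [] \<and> nfi P"
  unfolding nf_word_def nfi_def by blast

lemma nfs_Nil: "nfs []" by (simp add: nfs_def nfi_def)

lemma nfi_Cons:
  assumes a: "a \<in> A" and b: "b \<in> B" and bP: "P \<noteq> [] \<longrightarrow> b \<noteq> \<one>" and P: "nfs P"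
  shows "nfi ((a, b) # P)"
proof -
  have s: "set ((a, b) # P) \<subseteq> A \<times> B" using a b P by (simp add: nfs_def nfi_def)
  have f: "fst (((a, b) # P) ! i) \<noteq> \<one>" if i0: "0 < i" and il: "i < length ((a, b) # P)" for i
  proof -
    obtain j where j: "i = Suc j" using i0 by (cases i) simp_all
    have jl: "j < length P" using il j by simp
    show ?thesis
    proof (cases "j = 0")
      case True
      then show ?thesis using j jl P by (cases P) (auto simp: nfs_def)
    next
      case False
      then show ?thesis using j jl P by (auto simp: nfs_def nfi_def)
    qed
  qed
  have g: "snd (((a, b) # P) ! i) \<noteq> \<one>" if "i + 1 < length ((a, b) # P)" for i
  proof (cases i)
    case 0 then show ?thesis using that bP by auto
  next
    case (Suc j) then show ?thesis using that P by (auto simp: nfs_def nfi_def)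
  qed
  show ?thesis using s f g unfolding nfi_def by blast
qed

fun pA :: "'a list \<Rightarrow> ('a \<times> 'a) list" where
  "pA [] = []"
| "pA [a] = [(a, \<one>)]"
| "pA (a # b # r) = (a, b) # pA r"

definition psum :: "('a \<times> 'a) list \<Rightarrow> real" where
  "psum P = sum_list (map (\<lambda>(a, b). fA a + fB b) P)"

lemma psum_Cons [simp]: "psum ((a, b) # P) = fA a + fB b + psum P" "psum [] = 0"
  by (auto simp: psum_def)

lemma word_prod_Cons [simp]: "word_prod G ((a, b) # P) = a \<otimes> b \<otimes> word_prod G P" "word_prod G [] = \<one>"
  by (auto simp: word_prod_def)

lemma Fl_A: "x \<in> A \<Longrightarrow> Fl x = fA x" by (simp add: Fl_def)
lemma Fl_B: "letter x \<Longrightarrow> x \<notin> A \<Longrightarrow> Fl x = fB x" by (simp add: Fl_def)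

lemma pA_props:
  "red ws \<Longrightarrow> ws \<noteq> [] \<Longrightarrow> hd ws \<in> A \<Longrightarrow>
    nfs (pA ws) \<and> pA ws \<noteq> [] \<and> word_prod G (pA ws) = wprod ws \<and> psum (pA ws) = F ws"
proof (induction ws rule: pA.induct)
  case 1 then show ?case by simp
next
  case (2 a)
  have l: "letter a" using 2 by simp
  have "nfi [(a, \<one>)]" using nfi_Cons[of a \<one> "[]"] 2 B1 nfs_Nil by simp
  then show ?case using l letter_G[OF l] 2 by (simp add: nfs_def letter_def fB1 Fl_A)
next
  case (3 a b r)
  have la: "letter a" and lb: "letter b" and nab: "\<not> same a b" and rr: "red r"
    and rh: "r \<noteq> [] \<Longrightarrow> \<not> same b (hd r)"
    using "3.prems"(1) by (auto simp: red_Cons simp del: red.simps)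
  have aA: "a \<in> A" using "3.prems" by simp
  have bnA: "b \<notin> A" using same_iff[OF la lb] nab aA by blast
  have bB: "b \<in> B" using lb bnA unfolding letter_def by blast
  have IH: "r \<noteq> [] \<Longrightarrow> nfs (pA r) \<and> pA r \<noteq> [] \<and> word_prod G (pA r) = wprod r \<and> psum (pA r) = F r"
  proof -
    assume rne: "r \<noteq> []"
    have lr: "letter (hd r)" using rr rne red_letters by (cases r) auto
    have "hd r \<in> A" using same_iff[OF lb lr] rh[OF rne] bnA by blast
    then show ?thesis using "3.IH" rr rne by blast
  qed
  have wr: "word_prod G (pA r) = wprod r \<and> psum (pA r) = F r"
    using IH by (cases "r = []") auto
  have nr: "nfs (pA r)" using IH nfs_Nil by (cases "r = []") auto
  have ni: "nfi ((a, b) # pA r)" using nfi_Cons[OF aA bB _ nr] lb unfolding letter_def by blast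
  have rc: "set r \<subseteq> carrier G" using rr by (rule red_carrier)
  show ?case using ni wr la letter_G[OF la] letter_G[OF lb] wprod_closed[OF rc] aA bnA lb
    by (simp add: nfs_def letter_def m_assoc Fl_A Fl_B)
qed

lemma pA_hd: "fst (hd (pA (a # r))) = a" by (cases r) auto

definition toP where "toP ws = (if hd ws \<in> A then pA ws else (\<one>, hd ws) # pA (tl ws))"

lemma toP_props:
  assumes r: "red ws" and ne: "ws \<noteq> []"
  shows "nf_word G A B (toP ws) \<and> word_prod G (toP ws) = wprod ws \<and> psum (toP ws) = F ws
     \<and> fst (hd (toP ws)) = (if hd ws \<in> A then hd ws else \<one>)"
proof (cases "hd ws \<in> A")
  case True
  then show ?thesis using pA_props[OF r ne] ne r unfolding toP_def nf_word_iff nfs_def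
    by (cases ws) (auto simp: red_Cons pA_hd simp del: red.simps)
next
  case False
  obtain b t where ws: "ws = b # t" using ne by (cases ws) auto
  have lb: "letter b" and rt: "red t" and th: "t \<noteq> [] \<Longrightarrow> \<not> same b (hd t)"
    using r ws by (auto simp: red_Cons simp del: red.simps)
  have bnA: "b \<notin> A" using False ws by simp
  have bB: "b \<in> B" using lb bnA unfolding letter_def by blast
  have IH: "t \<noteq> [] \<Longrightarrow> nfs (pA t) \<and> pA t \<noteq> [] \<and> word_prod G (pA t) = wprod t \<and> psum (pA t) = F t"
  proof -
    assume tne: "t \<noteq> []"
    have lt: "letter (hd t)" using rt tne red_letters by (cases t) auto
    have "hd t \<in> A" using same_iff[OF lb lt] th[OF tne] bnA by blast
    then show ?thesis using pA_props rt tne by blast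
  qed
  have wr: "word_prod G (pA t) = wprod t \<and> psum (pA t) = F t"
    using IH by (cases "t = []") auto
  have nr: "nfs (pA t)" using IH nfs_Nil by (cases "t = []") auto
  have ni: "nfi ((\<one>, b) # pA t)" using nfi_Cons[OF A1 bB _ nr] lb unfolding letter_def by blast
  have tc: "set t \<subseteq> carrier G" using rt by (rule red_carrier)
  show ?thesis using ni wr ws False letter_G[OF lb] wprod_closed[OF tc] bnA lb
    unfolding toP_def nf_word_iff by (simp add: fA1 Fl_B)
qed

lemma wprod_ne_one:
  assumes r: "red ws" and ne: "ws \<noteq> []"
  shows "wprod ws \<noteq> \<one>"
proof
  assume e: "wprod ws = \<one>"
  obtain x t where ws: "ws = x # t" using ne by (cases ws) auto
  have lx: "letter x" and rt: "red t" and th: "t \<noteq> [] \<Longrightarrow> \<not> same x (hd t)"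
    using r ws by (auto simp: red_Cons simp del: red.simps)
  have xG: "x \<in> carrier G" using lx by (rule letter_G)
  have tc: "set t \<subseteq> carrier G" using rt by (rule red_carrier)
  show False
  proof (cases "t = []")
    case True then show False using e ws lx xG unfolding letter_def by simp
  next
    case tne: False
    have wt: "wprod t = inv x" using e ws xG wprod_closed[OF tc]
      by (metis inv_equality wprod_simps(2) r_inv)
    have ix: "inv x \<noteq> \<one>" using lx xG unfolding letter_def by (metis inv_one inv_inv)
    have lt: "letter (hd t)" using rt tne red_letters by (cases t) auto
    have tp: "nf_word G A B (toP t) \<and> word_prod G (toP t) = inv x \<and> fst (hd (toP t)) = (if hd t \<in> A then hd t else \<one>)"
      using toP_props[OF rt tne] wt by simp
    show False
    proof (cases "x \<in> A")
      case True
      have "hd t \<notin> A" using same_iff[OF lx lt] th[OF tne] True by blast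
      have n1: "nf_word G A B [(inv x, \<one>)]" using Ai[OF True] B1 ix unfolding nf_word_def by (simp; presburger)
      have w1: "word_prod G [(inv x, \<one>)] = inv x" using xG by simp
      have "toP t = [(inv x, \<one>)]" using uniq[OF _ ix _ _ n1 w1] tp xG by simp
      then show False using tp \<open>hd t \<notin> A\<close> ix by simp
    next
      case False
      have "hd t \<in> A" using same_iff[OF lx lt] th[OF tne] False by blast
      have xB: "x \<in> B" using lx False unfolding letter_def by blast
      have n1: "nf_word G A B [(\<one>, inv x)]" using Bi[OF xB] A1 ix unfolding nf_word_def by (simp; presburger)
      have w1: "word_prod G [(\<one>, inv x)] = inv x" using xG by simp
      have "toP t = [(\<one>, inv x)]" using uniq[OF _ ix _ _ n1 w1] tp xG by simp
      then show False using tp \<open>hd t \<in> A\<close> lt unfolding letter_def by simp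
    qed
  qed
qed

abbreviation "f \<equiv> split_qm G A B fA fB"

lemma KL: assumes r: "red ws" shows "f (wprod ws) = F ws"
proof (cases "ws = []")
  case True then show ?thesis by (simp add: split_qm_def)
next
  case False
  have c: "wprod ws \<in> carrier G" using wprod_closed[OF red_carrier[OF r]] .
  have n1: "wprod ws \<noteq> \<one>" using wprod_ne_one[OF r False] .
  have tp: "nf_word G A B (toP ws) \<and> word_prod G (toP ws) = wprod ws \<and> psum (toP ws) = F ws"
    using toP_props[OF r False] by simp
  have "normal_form G A B (wprod ws) = toP ws"
    unfolding normal_form_def
  proof (rule the_equality)
    show "nf_word G A B (toP ws) \<and> word_prod G (toP ws) = wprod ws" using tp by simp
    fix ps assume "nf_word G A B ps \<and> word_prod G ps = wprod ws"
    then show "ps = toP ws" using uniq[OF c n1] tp by blast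
  qed
  then show ?thesis using n1 tp unfolding split_qm_def psum_def by simp
qed


lemma same_sym: "same x y = same y x" unfolding same_def by blast

lemma UB:
  "red u \<Longrightarrow> red v \<Longrightarrow> \<exists>w. red w \<and> wprod w = wprod u \<otimes> wprod v \<and> \<bar>F u + F v - F w\<bar> \<le> max DA DB"
proof (induction "length u" arbitrary: u v rule: less_induct)
  case less
  have D0: "0 \<le> max DA DB" using DA_nonneg by simp
  have uc: "set u \<subseteq> carrier G" and vc: "set v \<subseteq> carrier G" using less.prems red_carrier by auto
  show ?case
  proof (cases "u = []")
    case True then show ?thesis using less.prems D0 wprod_closed[OF vc] by (intro exI[of _ v]) simp
  next
    case False
    then obtain u1 x where u: "u = u1 @ [x]" by (cases u rule: rev_cases) auto
    have ru1: "red u1" and lx: "letter x" and ux: "u1 \<noteq> [] \<Longrightarrow> \<not> same (last u1) x"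
      using less.prems(1) unfolding u red_append by auto
    show ?thesis
    proof (cases v)
      case Nil then show ?thesis using less.prems D0 wprod_closed[OF uc] by (intro exI[of _ u]) simp
    next
      case (Cons y v1)
      have ly: "letter y" and rv1: "red v1" and vy: "v1 \<noteq> [] \<Longrightarrow> \<not> same y (hd v1)"
        using less.prems(2) unfolding Cons by (auto simp: red_Cons simp del: red.simps)
      have xG: "x \<in> carrier G" and yG: "y \<in> carrier G" using lx ly letter_G by auto
      have u1c: "set u1 \<subseteq> carrier G" and v1c: "set v1 \<subseteq> carrier G" using ru1 rv1 red_carrier by auto
      have wu: "wprod u = wprod u1 \<otimes> x" using u u1c xG by (simp add: wprod_append)
      have Fu: "F u = F u1 + Fl x" using u by simp
      show ?thesis
      proof (cases "same x y")
        case False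
        have "red (u @ v)" unfolding red_append using less.prems False Cons u by simp
        then show ?thesis using uc vc D0 by (intro exI[of _ "u @ v"]) (simp add: wprod_append)
      next
        case sxy: True
        show ?thesis
        proof (cases "x \<otimes> y = \<one>")
          case True
          have yi: "y = inv x" using True xG yG by (metis inv_equality l_inv r_inv inv_inv inv_closed m_assoc l_one r_one)
          obtain w where w: "red w" "wprod w = wprod u1 \<otimes> wprod v1" "\<bar>F u1 + F v1 - F w\<bar> \<le> max DA DB"
            using less.hyps[of u1 v1] ru1 rv1 u by auto
          have "wprod u \<otimes> wprod v = wprod u1 \<otimes> wprod v1"
            using wu Cons True xG yG wprod_closed[OF u1c] wprod_closed[OF v1c]
            by (simp add: m_assoc[symmetric]) (simp add: m_assoc)
          moreover have "F u + F v = F u1 + F v1" using Fu Cons yi Fl_inv[OF lx] by simp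
          ultimately show ?thesis using w by metis
        next
          case False
          define z where "z = x \<otimes> y"
          have lz: "letter z" and zA: "z \<in> A \<longleftrightarrow> x \<in> A" using letter_mult[OF lx ly sxy False] z_def by auto
          have sz: "letter p \<Longrightarrow> same p z = same p x" for p using same_iff[OF _ lz] same_iff[OF _ lx] zA by blast
          have syx: "letter p \<Longrightarrow> same y p = same x p" for p
            using same_iff[OF ly] same_iff[OF lx] same_iff[OF lx ly] sxy by blast
          have r1: "red (u1 @ [z])"
          proof -
            have "u1 \<noteq> [] \<Longrightarrow> \<not> same (last u1) z"
              using ux sz ru1 red_letters by (metis last_in_set)
            then show ?thesis unfolding red_append using ru1 lz by simp
          qed
          have r2: "red (z # v1)"
          proof -
            have "v1 \<noteq> [] \<Longrightarrow> \<not> same z (hd v1)"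
              using vy syx sz rv1 red_letters same_sym by (metis hd_in_set)
            then show ?thesis using rv1 lz by (simp add: red_Cons del: red.simps)
          qed
          have rw: "red (u1 @ z # v1)" using r1 r2 unfolding red_append by (simp add: red_Cons del: red.simps)
          have zG: "z \<in> carrier G" using lz letter_G by auto
          have wp: "wprod (u1 @ z # v1) = wprod u \<otimes> wprod v"
            using wu Cons u1c v1c zG xG yG wprod_closed[OF u1c] wprod_closed[OF v1c]
            by (simp add: wprod_append z_def m_assoc)
          have "\<bar>F u + F v - F (u1 @ z # v1)\<bar> = \<bar>Fl x + Fl y - Fl z\<bar>" using Fu Cons by simp
          also have "\<dots> \<le> max DA DB"
          proof (cases "x \<in> A")
            case True
            have "y \<in> A" using same_iff[OF lx ly] sxy True by blast
            then have "\<bar>Fl x + Fl y - Fl z\<bar> \<le> DA" using DA_bound[OF True \<open>y \<in> A\<close>] True zA z_def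
              by (simp add: Fl_A abs_minus_commute algebra_simps)
            then show ?thesis by simp
          next
            case False
            have yA: "y \<notin> A" using same_iff[OF lx ly] sxy False by blast
            have xB: "x \<in> B" and yB: "y \<in> B" using lx ly False yA unfolding letter_def by auto
            have "\<bar>Fl x + Fl y - Fl z\<bar> \<le> DB" using DB_bound[OF xB yB] False yA zA z_def lx ly lz
              by (simp add: Fl_B abs_minus_commute algebra_simps)
            then show ?thesis by simp
          qed
          finally show ?thesis using rw wp by metis
        qed
      qed
    qed
  qed
qed

lemma letter_word: "x \<in> A \<or> x \<in> B \<Longrightarrow> \<exists>w. red w \<and> wprod w = x"
proof (cases "x = \<one>")
  case True then show ?thesis by (intro exI[of _ "[]"]) simp
next
  case False
  assume "x \<in> A \<or> x \<in> B"
  then have l: "letter x" using False unfolding letter_def by blast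
  then show ?thesis using letter_G[OF l] by (intro exI[of _ "[x]"]) simp
qed

lemma rep_pairs: "set ps \<subseteq> A \<times> B \<Longrightarrow> \<exists>w. red w \<and> wprod w = word_prod G ps"
proof (induction ps)
  case Nil then show ?case by (intro exI[of _ "[]"]) simp
next
  case (Cons p ps)
  obtain a b where p: "p = (a, b)" by (cases p) auto
  have a: "a \<in> A" and b: "b \<in> B" using Cons.prems p by auto
  obtain wa where wa: "red wa" "wprod wa = a" using letter_word a by blast
  obtain wb where wb: "red wb" "wprod wb = b" using letter_word b by blast
  obtain wr where wr: "red wr" "wprod wr = word_prod G ps" using Cons by auto
  obtain w1 where w1: "red w1" "wprod w1 = a \<otimes> b" using UB[OF wa(1) wb(1)] wa wb by auto
  obtain w2 where w2: "red w2" "wprod w2 = wprod w1 \<otimes> wprod wr" using UB[OF w1(1) wr(1)] by auto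
  show ?case using w2 w1 wr p by auto
qed

lemma rep: "g \<in> carrier G \<Longrightarrow> \<exists>w. red w \<and> wprod w = g"
proof (cases "g = \<one>")
  case True then show ?thesis by (intro exI[of _ "[]"]) simp
next
  case False
  assume g: "g \<in> carrier G"
  then obtain ps where "nf_word G A B ps" "word_prod G ps = g" using fp False unfolding is_free_product_def by blast
  then show ?thesis using rep_pairs unfolding nf_word_def by metis
qed

lemma f_defect: "g \<in> carrier G \<Longrightarrow> h \<in> carrier G \<Longrightarrow> \<bar>f (g \<otimes> h) - f g - f h\<bar> \<le> max DA DB"
proof -
  assume g: "g \<in> carrier G" and h: "h \<in> carrier G"
  obtain u where u: "red u" "wprod u = g" using rep[OF g] by blast
  obtain v where v: "red v" "wprod v = h" using rep[OF h] by blast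
  obtain w where w: "red w" "wprod w = g \<otimes> h" "\<bar>F u + F v - F w\<bar> \<le> max DA DB" using UB[OF u(1) v(1)] u v by auto
  have "f (g \<otimes> h) = F w" using KL[OF w(1)] w(2) by simp
  moreover have "f g = F u" "f h = F v" using KL u v by auto
  ultimately show ?thesis using w(3) by (simp add: abs_minus_commute algebra_simps)
qed

lemma f_A: "x \<in> A \<Longrightarrow> f x = fA x"
proof (cases "x = \<one>")
  case True then show ?thesis by (simp add: split_qm_def fA1)
next
  case False
  assume x: "x \<in> A"
  then have l: "letter x" using False unfolding letter_def by blast
  have "f (wprod [x]) = F [x]" using l by (intro KL) simp
  then show ?thesis using letter_G[OF l] x by (simp add: Fl_A)
qed

lemma f_B: "x \<in> B \<Longrightarrow> f x = fB x"
proof (cases "x = \<one>")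
  case True then show ?thesis by (simp add: split_qm_def fB1)
next
  case False
  assume x: "x \<in> B"
  then have l: "letter x" using False unfolding letter_def by blast
  have xA: "x \<notin> A" using x False AB by blast
  have "f (wprod [x]) = F [x]" using l by (intro KL) simp
  then show ?thesis using letter_G[OF l] xA l by (simp add: Fl_B)
qed


abbreviation "Dm \<equiv> max DA DB"

lemma qm_f: "qm G f Dm"
  by (simp add: qm_def qm_axioms_def f_defect is_group)

abbreviation "\<psi>f \<equiv> homogenization G f"

lemma hd_concat_rep: "w \<noteq> [] \<Longrightarrow> n > 0 \<Longrightarrow> hd (concat (replicate n w)) = hd w"
  by (cases n) auto

lemma red_rep: "red w \<Longrightarrow> w \<noteq> [] \<Longrightarrow> \<not> same (last w) (hd w) \<Longrightarrow> red (concat (replicate n w))"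
proof (induction n)
  case 0 then show ?case by simp
next
  case (Suc n)
  have "concat (replicate (Suc n) w) = w @ concat (replicate n w)" by simp
  moreover have "concat (replicate n w) \<noteq> [] \<Longrightarrow> hd (concat (replicate n w)) = hd w"
    using Suc.prems(2) by (cases n) auto
  moreover have "red (concat (replicate n w))" using Suc by blast
  ultimately have "red (w @ concat (replicate n w))" using Suc.prems unfolding red_append by metis
  then show ?case by simp
qed

lemma hom_cyc:
  assumes r: "red w" and ne: "w \<noteq> []" and c: "\<not> same (last w) (hd w)"
  shows "\<psi>f (wprod w) = F w"
proof -
  interpret Q: qm G f Dm by (rule qm_f)
  have wc: "set w \<subseteq> carrier G" using r by (rule red_carrier)
  have pw: "wprod (concat (replicate n w)) = wprod w [^] n" for n
  proof (induction n)
    case 0 then show ?case by simp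
  next
    case (Suc n)
    have "set (concat (replicate n w)) \<subseteq> carrier G" using wc by auto
    then show ?case using Suc wc wprod_closed[OF wc] nat_pow_Suc2[OF wprod_closed[OF wc], of n]
      by (simp add: wprod_append del: nat_pow_Suc)
  qed
  have Fr: "F (concat (replicate n w)) = real n * F w" for n
    by (induction n) (auto simp: algebra_simps)
  have "f (wprod w [^] n) = real n * F w" for n
    using KL[OF red_rep[OF r ne c, of n]] pw Fr by simp
  then show ?thesis using Q.hom_pure wprod_closed[OF wc] by blast
qed

lemma construction:
  assumes lx: "letter x" and ly: "letter y" and lb: "letter b" and sxy: "same x y"
    and z1: "x \<otimes> y \<noteq> \<one>" and nxb: "\<not> same x b"
  shows "\<exists>g\<in>carrier G. \<exists>h\<in>carrier G. \<psi>f (g \<otimes> h) - \<psi>f g - \<psi>f h = 2 * (Fl (x \<otimes> y) - Fl x - Fl y)"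
proof -
  interpret Q: qm G f Dm by (rule qm_f)
  define z where "z = x \<otimes> y"
  have lz: "letter z" and zA: "z \<in> A \<longleftrightarrow> x \<in> A" using letter_mult[OF lx ly sxy z1] z_def by auto
  have li: "letter (inv b)" and iA: "inv b \<in> A \<longleftrightarrow> b \<in> A" using letter_inv[OF lb] by auto
  have yA: "y \<in> A \<longleftrightarrow> x \<in> A" using same_iff[OF lx ly] sxy by blast
  have bA: "b \<in> A \<longleftrightarrow> \<not> x \<in> A" using same_iff[OF lx lb] nxb by blast
  note S = same_iff[OF lx] same_iff[OF ly] same_iff[OF lb] same_iff[OF lz] same_iff[OF li]
  have r1: "red [y, b, x, b]" using lx ly lb yA bA by (simp add: S)
  have r2: "red [inv b, y, inv b, x]" using lx ly lb li iA yA bA by (simp add: S)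
  have r3: "red [z, b, z, inv b]" using lz lb li iA zA bA by (simp add: S)
  have c1: "\<not> same b y" using S ly lb yA bA by simp
  have c2: "\<not> same x (inv b)" using S lx li iA bA by simp
  have c3: "\<not> same (inv b) z" using S lz li iA bA zA by simp
  have p1: "\<psi>f (wprod [y, b, x, b]) = Fl y + Fl b + Fl x + Fl b" using hom_cyc[OF r1] c1 by simp
  have p2: "\<psi>f (wprod [inv b, y, inv b, x]) = - Fl b + Fl y - Fl b + Fl x"
    using hom_cyc[OF r2] c2 Fl_inv[OF lb] by simp
  have p3: "\<psi>f (wprod [z, b, z, inv b]) = 2 * Fl z"
    using hom_cyc[OF r3] c3 Fl_inv[OF lb] by simp
  have G: "x \<in> carrier G" "y \<in> carrier G" "b \<in> carrier G" using lx ly lb letter_G by auto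
  have e: "wprod [y, b, x, b] \<otimes> wprod [inv b, y, inv b, x] = inv x \<otimes> wprod [z, b, z, inv b] \<otimes> inv (inv x)"
    using G by (simp add: z_def m_assoc Q.cancel1 Q.cancel2)
  have "\<psi>f (wprod [y, b, x, b] \<otimes> wprod [inv b, y, inv b, x]) = 2 * Fl z"
    unfolding e using Q.hom_conj[of "inv x" "wprod [z, b, z, inv b]"] G p3 by (simp add: z_def)
  then have "\<psi>f (wprod [y, b, x, b] \<otimes> wprod [inv b, y, inv b, x]) - \<psi>f (wprod [y, b, x, b])
       - \<psi>f (wprod [inv b, y, inv b, x]) = 2 * (Fl (x \<otimes> y) - Fl x - Fl y)"
    using p1 p2 z_def by simp
  moreover have "wprod [y, b, x, b] \<in> carrier G" "wprod [inv b, y, inv b, x] \<in> carrier G" using G by auto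
  ultimately show ?thesis by blast
qed

lemma psi_defect_bdd: "bdd_above (defect_set G \<psi>f)"
proof -
  interpret Q: qm G f Dm by (rule qm_f)
  show ?thesis unfolding defect_set_def bdd_above_def using Q.hom_defect by blast
qed

lemma psi_defect_ge: "\<lbrakk>g \<in> carrier G; h \<in> carrier G\<rbrakk> \<Longrightarrow> \<bar>\<psi>f (g \<otimes> h) - \<psi>f g - \<psi>f h\<bar> \<le> defect G \<psi>f"
  unfolding defect_def using psi_defect_bdd by (intro cSup_upper) (auto simp: defect_set_def)

lemma psi_defect_nonneg: "0 \<le> defect G \<psi>f"
  using psi_defect_ge[of \<one> \<one>] by (meson abs_ge_zero one_closed order_trans)

lemma lower_A:
  assumes Bn: "B \<noteq> {\<one>}"
  shows "2 * DA \<le> defect G \<psi>f"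
proof -
  obtain b where bB: "b \<in> B" and b1: "b \<noteq> \<one>" using Bn B1 by blast
  have lb: "letter b" using bB b1 unfolding letter_def by blast
  have bnA: "b \<notin> A" using bB b1 AB by blast
  have "DA \<le> defect G \<psi>f / 2"
    unfolding DA_def defect_def[of "G\<lparr>carrier := A\<rparr>"] setA_eq
  proof (rule cSup_least)
    show "{\<bar>fA (g \<otimes> h) - fA g - fA h\<bar> |g h. g \<in> A \<and> h \<in> A} \<noteq> {}" using A1 by blast
    fix s assume "s \<in> {\<bar>fA (g \<otimes> h) - fA g - fA h\<bar> |g h. g \<in> A \<and> h \<in> A}"
    then obtain x y where x: "x \<in> A" and y: "y \<in> A" and s: "s = \<bar>fA (x \<otimes> y) - fA x - fA y\<bar>" by blast
    show "s \<le> defect G \<psi>f / 2"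
    proof (cases "x = \<one> \<or> y = \<one> \<or> x \<otimes> y = \<one>")
      case True
      have "s = 0"
      proof -
        have xG: "x \<in> carrier G" "y \<in> carrier G" using x y AG by auto
        { assume "x = \<one>" then have ?thesis using s xG fA1 by simp }
        moreover { assume "y = \<one>" then have ?thesis using s xG fA1 by simp }
        moreover { assume e: "x \<otimes> y = \<one>"
          then have "y = inv x" using xG by (metis inv_equality l_inv r_inv inv_inv inv_closed m_assoc l_one r_one)
          then have ?thesis using s e fA1 fAi[OF x] by simp }
        ultimately show ?thesis using True by blast
      qed
      then show ?thesis using psi_defect_nonneg by simp
    next
      case False
      have lx: "letter x" and ly: "letter y" using x y False unfolding letter_def by auto
      have sxy: "same x y" using x y unfolding same_def by blast
      have nxb: "\<not> same x b" using same_iff[OF lx lb] x bnA by blast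
      obtain g h where gh: "g \<in> carrier G" "h \<in> carrier G"
        "\<psi>f (g \<otimes> h) - \<psi>f g - \<psi>f h = 2 * (Fl (x \<otimes> y) - Fl x - Fl y)"
        using construction[OF lx ly lb sxy _ nxb] False by blast
      have "Fl (x \<otimes> y) - Fl x - Fl y = fA (x \<otimes> y) - fA x - fA y" using x y Am by (simp add: Fl_A)
      then have "\<bar>2 * (Fl (x \<otimes> y) - Fl x - Fl y)\<bar> = 2 * s" unfolding s by (simp only: abs_mult)
      then have "2 * s = \<bar>\<psi>f (g \<otimes> h) - \<psi>f g - \<psi>f h\<bar>" using gh(3) by simp
      then show ?thesis using psi_defect_ge[OF gh(1,2)] by simp
    qed
  qed
  then show ?thesis by simp
qed

lemma lower_B:
  assumes An: "A \<noteq> {\<one>}"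
  shows "2 * DB \<le> defect G \<psi>f"
proof -
  obtain b where bA: "b \<in> A" and b1: "b \<noteq> \<one>" using An A1 by blast
  have lb: "letter b" using bA b1 unfolding letter_def by blast
  have "DB \<le> defect G \<psi>f / 2"
    unfolding DB_def defect_def[of "G\<lparr>carrier := B\<rparr>"] setB_eq
  proof (rule cSup_least)
    show "{\<bar>fB (g \<otimes> h) - fB g - fB h\<bar> |g h. g \<in> B \<and> h \<in> B} \<noteq> {}" using B1 by blast
    fix s assume "s \<in> {\<bar>fB (g \<otimes> h) - fB g - fB h\<bar> |g h. g \<in> B \<and> h \<in> B}"
    then obtain x y where x: "x \<in> B" and y: "y \<in> B" and s: "s = \<bar>fB (x \<otimes> y) - fB x - fB y\<bar>" by blast
    show "s \<le> defect G \<psi>f / 2"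
    proof (cases "x = \<one> \<or> y = \<one> \<or> x \<otimes> y = \<one>")
      case True
      have "s = 0"
      proof -
        have xG: "x \<in> carrier G" "y \<in> carrier G" using x y BG by auto
        { assume "x = \<one>" then have ?thesis using s xG fB1 by simp }
        moreover { assume "y = \<one>" then have ?thesis using s xG fB1 by simp }
        moreover { assume e: "x \<otimes> y = \<one>"
          then have "y = inv x" using xG by (metis inv_equality l_inv r_inv inv_inv inv_closed m_assoc l_one r_one)
          then have ?thesis using s e fB1 fBi[OF x] by simp }
        ultimately show ?thesis using True by blast
      qed
      then show ?thesis using psi_defect_nonneg by simp
    next
      case False
      have lx: "letter x" and ly: "letter y" using x y False unfolding letter_def by auto
      have xA: "x \<notin> A" "y \<notin> A" using x y False AB by auto
      have xyA: "x \<otimes> y \<notin> A" using Bm[OF x y] False AB by blast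
      have sxy: "same x y" using x y unfolding same_def by blast
      have nxb: "\<not> same x b" using same_iff[OF lx lb] xA bA by blast
      obtain g h where gh: "g \<in> carrier G" "h \<in> carrier G"
        "\<psi>f (g \<otimes> h) - \<psi>f g - \<psi>f h = 2 * (Fl (x \<otimes> y) - Fl x - Fl y)"
        using construction[OF lx ly lb sxy _ nxb] False by blast
      have lxy: "letter (x \<otimes> y)" using letter_mult[OF lx ly sxy] False by blast
      have "Fl (x \<otimes> y) - Fl x - Fl y = fB (x \<otimes> y) - fB x - fB y" using xA xyA lx ly lxy by (simp add: Fl_B)
      then have "\<bar>2 * (Fl (x \<otimes> y) - Fl x - Fl y)\<bar> = 2 * s" unfolding s by (simp only: abs_mult)
      then have "2 * s = \<bar>\<psi>f (g \<otimes> h) - \<psi>f g - \<psi>f h\<bar>" using gh(3) by simp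
      then show ?thesis using psi_defect_ge[OF gh(1,2)] by simp
    qed
  qed
  then show ?thesis by simp
qed

end


theorem theorem3p3:
  fixes G :: "('a, 'b) monoid_scheme" and A B :: "'a set" and fA fB :: "'a \<Rightarrow> real"
  assumes "is_free_product G A B"
    and "A \<noteq> {\<one>\<^bsub>G\<^esub>}" and "B \<noteq> {\<one>\<^bsub>G\<^esub>}"
    and "quasimorphism (G\<lparr>carrier := A\<rparr>) fA" and "alternating (G\<lparr>carrier := A\<rparr>) fA"
    and "quasimorphism (G\<lparr>carrier := B\<rparr>) fB" and "alternating (G\<lparr>carrier := B\<rparr>) fB"
  shows "quasimorphism G (split_qm G A B fA fB)
    \<and> gromov_norm_class G (split_qm G A B fA fB)
        = defect G (homogenization G (split_qm G A B fA fB)) / 2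
    \<and> defect G (homogenization G (split_qm G A B fA fB)) / 2 = defect G (split_qm G A B fA fB)
    \<and> defect G (split_qm G A B fA fB)
        = max (defect (G\<lparr>carrier := A\<rparr>) fA) (defect (G\<lparr>carrier := B\<rparr>) fB)
    \<and> (\<forall>\<beta>. bounded_fun G \<beta> \<longrightarrow>
          defect G (split_qm G A B fA fB) \<le> defect G (\<lambda>g. split_qm G A B fA fB g + \<beta> g))"
proof -
  have grp: "group G" using assms(1) by (simp add: is_free_product_def)
  interpret fpq G A B fA fB using assms grp by (simp add: fpq_def fpq_axioms_def)
  interpret Q: qm G f Dm by (rule qm_f)
  have bddf: "bdd_above (defect_set G f)"
    unfolding defect_set_def bdd_above_def using f_defect by blast
  have nef: "defect_set G f \<noteq> {}" unfolding defect_set_def by blast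
  have qf: "quasimorphism G f" using bddf by (simp add: quasimorphism_def)
  have df_le: "defect G f \<le> Dm"
    unfolding defect_def by (rule cSup_least[OF nef]) (auto simp: defect_set_def f_defect)
  have DA_le: "DA \<le> defect G f"
    unfolding DA_def defect_def
  proof (rule cSup_subset_mono)
    show "defect_set (G\<lparr>carrier := A\<rparr>) fA \<noteq> {}" using A1 unfolding setA_eq by blast
    show "bdd_above (defect_set G f)" by (rule bddf)
    show "defect_set (G\<lparr>carrier := A\<rparr>) fA \<subseteq> defect_set G f"
    proof
      fix s assume "s \<in> defect_set (G\<lparr>carrier := A\<rparr>) fA"
      then obtain x y where xy: "x \<in> A" "y \<in> A" and s: "s = \<bar>fA (x \<otimes>\<^bsub>G\<^esub> y) - fA x - fA y\<bar>"
        unfolding setA_eq by blast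
      have "s = \<bar>f (x \<otimes>\<^bsub>G\<^esub> y) - f x - f y\<bar>" using s xy f_A Am by simp
      then show "s \<in> defect_set G f" unfolding defect_set_def using xy AG by blast
    qed
  qed
  have DB_le: "DB \<le> defect G f"
    unfolding DB_def defect_def
  proof (rule cSup_subset_mono)
    show "defect_set (G\<lparr>carrier := B\<rparr>) fB \<noteq> {}" using B1 unfolding setB_eq by blast
    show "bdd_above (defect_set G f)" by (rule bddf)
    show "defect_set (G\<lparr>carrier := B\<rparr>) fB \<subseteq> defect_set G f"
    proof
      fix s assume "s \<in> defect_set (G\<lparr>carrier := B\<rparr>) fB"
      then obtain x y where xy: "x \<in> B" "y \<in> B" and s: "s = \<bar>fB (x \<otimes>\<^bsub>G\<^esub> y) - fB x - fB y\<bar>"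
        unfolding setB_eq by blast
      have "s = \<bar>f (x \<otimes>\<^bsub>G\<^esub> y) - f x - f y\<bar>" using s xy f_B Bm by simp
      then show "s \<in> defect_set G f" unfolding defect_set_def using xy BG by blast
    qed
  qed
  have df: "defect G f = Dm" using df_le DA_le DB_le by linarith
  have nepsi: "defect_set G \<psi>f \<noteq> {}" unfolding defect_set_def by blast
  have dpsi_le: "defect G \<psi>f \<le> 2 * Dm"
    unfolding defect_def[of G \<psi>f] by (rule cSup_least[OF nepsi]) (auto simp: defect_set_def Q.hom_defect)
  have dpsi: "defect G \<psi>f = 2 * Dm" using dpsi_le lower_A[OF assms(3)] lower_B[OF assms(2)] by linarith
  have pert: "defect G f \<le> defect G (\<lambda>g. f g + \<beta> g)" if bd: "bounded_fun G \<beta>" for \<beta>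
  proof -
    obtain C where C: "\<forall>g\<in>carrier G. \<bar>\<beta> g\<bar> \<le> C" using bd unfolding bounded_fun_def by blast
    define q where "q = (\<lambda>g. f g + \<beta> g)"
    have qb0: "\<bar>q (g \<otimes>\<^bsub>G\<^esub> h) - q g - q h\<bar> \<le> Dm + 3 * C" if "g \<in> carrier G" "h \<in> carrier G" for g h
    proof -
      have "\<bar>\<beta> (g \<otimes>\<^bsub>G\<^esub> h)\<bar> \<le> C" "\<bar>\<beta> g\<bar> \<le> C" "\<bar>\<beta> h\<bar> \<le> C" using C that by auto
      then show ?thesis using f_defect[OF that] unfolding q_def by (simp add: abs_le_iff)
    qed
    have bddq: "bdd_above (defect_set G q)"
      unfolding defect_set_def bdd_above_def using qb0 by blast
    have qb: "\<bar>q (g \<otimes>\<^bsub>G\<^esub> h) - q g - q h\<bar> \<le> defect G q" if "g \<in> carrier G" "h \<in> carrier G" for g h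
      unfolding defect_def using bddq that by (intro cSup_upper) (auto simp: defect_set_def)
    interpret R: qm G q "defect G q" by (simp add: qm_def qm_axioms_def qb is_group)
    have eqh: "homogenization G q x = \<psi>f x" if "x \<in> carrier G" for x
      unfolding q_def by (rule hom_perturb[OF is_group that f_defect C])
    have "defect G \<psi>f \<le> 2 * defect G q"
      unfolding defect_def[of G \<psi>f]
    proof (rule cSup_least[OF nepsi])
      fix s assume "s \<in> defect_set G \<psi>f"
      then obtain g h where gh: "g \<in> carrier G" "h \<in> carrier G" and s: "s = \<bar>\<psi>f (g \<otimes>\<^bsub>G\<^esub> h) - \<psi>f g - \<psi>f h\<bar>"
        unfolding defect_set_def by blast
      have "s = \<bar>homogenization G q (g \<otimes>\<^bsub>G\<^esub> h) - homogenization G q g - homogenization G q h\<bar>"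
        using s eqh gh by simp
      then show "s \<le> 2 * defect G q" using R.hom_defect[OF gh] by simp
    qed
    then show ?thesis using dpsi df unfolding q_def by simp
  qed
  have S: "gromov_norm_class G f = Dm"
    unfolding gromov_norm_class_def
  proof (rule cInf_eq_minimum)
    have "bounded_fun G (\<lambda>_. 0)" unfolding bounded_fun_def by (intro exI[of _ 0]) simp
    moreover have "defect G (\<lambda>g. f g + 0) = Dm" using df by simp
    ultimately show "Dm \<in> {defect G (\<lambda>g. f g + \<beta> g) |\<beta>. bounded_fun G \<beta>}" by force
    fix x assume "x \<in> {defect G (\<lambda>g. f g + \<beta> g) |\<beta>. bounded_fun G \<beta>}"
    then show "Dm \<le> x" using pert df by auto
  qed
  show ?thesis using qf S dpsi df pert unfolding DA_def DB_def by simp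
qed


end
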